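(* In the setting of the context, let $A=k[d_4]$, and define $$B=k\oplus K\oplus d_2K\oplus d_2^2K\oplus\cdots,\qquad C=k\oplus M\oplus N\oplus d_1N\oplus d_1^2N\oplus d_1^3N\oplus\cdots.$$ These are $kU_3$-submodules of $k[x,y,z]$. Then multiplication in $k[x,y,z]$ induces an isomorphism of $kU_3$-modules $$A\otimes_k B\otimes_k C\xrightarrow{\ \cong\ } k[x,y,z].$$
   Context: Let $k=\mathbb{F}_2$ and let $U_3\cong D_8$ be the group of upper unitriangular $3\times3$ matrices over $\mathbb{F}_2$. The group $U_3$ acts on $k[x,y,z]$ by graded algebra automorphisms, preserving the flag $\langle x\rangle\subset\langle x,y\rangle\subset\langle x,y,z\rangle$. The degree-one part $M=\langle x,y,z\rangle$ is the natural module. The action is generated by the following elements: - $b$, which sends $y\mapsto y+x$ and fixes $x,z$; - $c$, which sends $z\mapsto z+x$ and fixes $x,y$; - $d$, which sends $z\mapsto z+y$ and fixes $x,y$. Put $d_1=x$, $d_2=y^2+xy$ and $d_4=z(z+y)(z+x)(z+y+x)$. Let $N$ be the $kU_3$-submodule of $k[x,y,z]$ generated by $z^2+yz$, and let $K$ be the $kU_3$-submodule generated by $z^2+xz$. Here $k$ denotes the constants (degree $0$). *)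

theory Defs
  imports Complex_Main "HOL-Library.Poly_Mapping" "HOL-Library.Product_Plus" "HOL-Library.Z2"
begin

text \<open>Polynomials in k[x,y,z] over k = F_2: finitely supported maps from exponent
 triples (i,j,l), standing for x^i y^j z^l, to the field bit = F_2.\<close>

type_synonym poly3 = "(nat \<times> nat \<times> nat) \<Rightarrow>\<^sub>0 bit"

definition const3 :: "bit \<Rightarrow> poly3" where
  "const3 c = Poly_Mapping.single (0,0,0) c"

definition scale3 :: "bit \<Rightarrow> poly3 \<Rightarrow> poly3" where
  "scale3 c p = const3 c * p"

abbreviation span3 :: "poly3 set \<Rightarrow> poly3 set" where
  "span3 \<equiv> module.span scale3"

abbreviation independent3 :: "poly3 set \<Rightarrow> bool" where
  "independent3 S \<equiv> \<not> module.dependent scale3 S"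

abbreviation subspace3 :: "poly3 set \<Rightarrow> bool" where
  "subspace3 \<equiv> module.subspace scale3"

definition X :: poly3 where "X = Poly_Mapping.single (1,0,0) 1"
definition Y :: poly3 where "Y = Poly_Mapping.single (0,1,0) 1"
definition Z :: poly3 where "Z = Poly_Mapping.single (0,0,1) 1"

definition subst3 :: "poly3 \<Rightarrow> poly3 \<Rightarrow> poly3 \<Rightarrow> poly3 \<Rightarrow> poly3" where
  "subst3 fx fy fz p =
     (\<Sum>m\<in>Poly_Mapping.keys p. const3 (Poly_Mapping.lookup p m) * fx ^ fst m * fy ^ fst (snd m) * fz ^ snd (snd m))"

definition act_b :: "poly3 \<Rightarrow> poly3" where "act_b = subst3 X (Y + X) Z"
definition act_c :: "poly3 \<Rightarrow> poly3" where "act_c = subst3 X Y (Z + X)"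
definition act_d :: "poly3 \<Rightarrow> poly3" where "act_d = subst3 X Y (Z + Y)"

text \<open>The group U_3 acting on k[x,y,z], generated by b, c, d (each an involution,
 so the generated submonoid is the generated group).\<close>
inductive_set U3 :: "(poly3 \<Rightarrow> poly3) set" where
  U3_id: "id \<in> U3"
| U3_b: "g \<in> U3 \<Longrightarrow> act_b \<circ> g \<in> U3"
| U3_c: "g \<in> U3 \<Longrightarrow> act_c \<circ> g \<in> U3"
| U3_d: "g \<in> U3 \<Longrightarrow> act_d \<circ> g \<in> U3"

definition kU3_submodule :: "poly3 set \<Rightarrow> bool" where
  "kU3_submodule S \<longleftrightarrow> subspace3 S \<and> (\<forall>g\<in>U3. g ` S \<subseteq> S)"

definition kU3_generated :: "poly3 \<Rightarrow> poly3 set" where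
  "kU3_generated f = span3 {g f | g. g \<in> U3}"

definition kconst :: "poly3 set" where "kconst = span3 {1}"
definition Mnat :: "poly3 set" where "Mnat = span3 {X, Y, Z}"

definition d1 :: poly3 where "d1 = X"
definition d2 :: poly3 where "d2 = Y ^ 2 + X * Y"
definition d4 :: poly3 where "d4 = Z * (Z + Y) * (Z + X) * (Z + Y + X)"

definition Nmod :: "poly3 set" where "Nmod = kU3_generated (Z ^ 2 + Y * Z)"
definition Kmod :: "poly3 set" where "Kmod = kU3_generated (Z ^ 2 + X * Z)"

text \<open>A = k[d_4]; B = k + K + d_2 K + d_2^2 K + ...; C = k + M + N + d_1 N + ...
 (internal sums of subspaces of k[x,y,z]; they are direct by degree).\<close>
definition Amod :: "poly3 set" where "Amod = span3 (range (\<lambda>i. d4 ^ i))"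
definition Bmod :: "poly3 set" where
  "Bmod = span3 (kconst \<union> (\<Union>i. (\<lambda>p. d2 ^ i * p) ` Kmod))"
definition Cmod :: "poly3 set" where
  "Cmod = span3 (kconst \<union> Mnat \<union> (\<Union>i. (\<lambda>p. d1 ^ i * p) ` Nmod))"

end

theory Submission
  imports Defs
begin

lemma two0: "(2::poly3) = 0"
  by (metis single_numeral bit_2_eq_0 single_zero)
lemma add_self[simp]: "(a::poly3) + a = 0"
  by (metis mult_2 mult_zero_left two0)
lemma add_self2[simp]: "(a::poly3) + (a + b) = b"
  by (metis add.assoc add_self add_0)
lemma two_times[simp]: "2 * (a::poly3) = 0"
  by (simp add: two0)
lemma minus_poly3[simp]: "- (a::poly3) = a"
  by (metis add_self add_eq_0_iff)
lemma diff_poly3[simp]: "(a::poly3) - b = a + b"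
  by (metis diff_conv_add_uminus minus_poly3)

lemma bit_cases: "(c::bit) = 0 \<or> c = 1"
  by (cases c) auto

lemma const3_add: "const3 (a + b) = const3 a + const3 b"
  unfolding const3_def by (rule single_add)
lemma zero3: "(0::nat\<times>nat\<times>nat) = (0,0,0)"
  by (simp add: zero_prod_def)
lemma const3_mult: "const3 (a * b) = const3 a * const3 b"
  by (simp add: const3_def mult_single)
lemma const3_1[simp]: "const3 1 = 1"
  by (simp add: const3_def zero3[symmetric])
lemma const3_0[simp]: "const3 0 = 0"
  by (simp add: const3_def)

lemma scale3_0[simp]: "scale3 0 p = 0"
  by (simp add: scale3_def)
lemma scale3_1[simp]: "scale3 1 p = p"
  by (simp add: scale3_def)

interpretation V: vector_space scale3
  by unfold_locales (auto simp: scale3_def const3_add const3_mult algebra_simps)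

lemma span_mult_closed:
  assumes "p \<in> span3 S" and "\<And>s. s \<in> S \<Longrightarrow> c * s \<in> span3 T"
  shows "c * p \<in> span3 T"
  using assms(1)
proof (induction rule: V.span_induct_alt)
  case base then show ?case by (simp add: V.span_zero)
next
  case (step a x y)
  have "c * (scale3 a x + y) = scale3 a (c * x) + c * y"
    by (simp add: scale3_def algebra_simps)
  then show ?case using step assms(2) by (simp add: V.span_add V.span_scale)
qed

lemma sum_scale_bit:
  assumes "finite T"
  shows "(\<Sum>v\<in>T. scale3 (u v) v) = sum id {v\<in>T. u v = 1}"
proof -
  have "(\<Sum>v\<in>T. scale3 (u v) v) = (\<Sum>v\<in>T. if u v = 1 then v else 0)"
    by (rule sum.cong, simp, metis bit_cases scale3_0 scale3_1)
  also have "\<dots> = sum id {v\<in>T. u v = 1}"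
    using assms by (simp add: sum.If_cases Int_def)
  finally show ?thesis .
qed

lemma indep_iff:
  "independent3 S \<longleftrightarrow> (\<forall>T. T \<subseteq> S \<and> finite T \<and> T \<noteq> {} \<longrightarrow> sum id T \<noteq> 0)"
proof
  assume I: "independent3 S"
  show "\<forall>T. T \<subseteq> S \<and> finite T \<and> T \<noteq> {} \<longrightarrow> sum id T \<noteq> 0"
  proof (intro allI impI notI)
    fix T assume T: "T \<subseteq> S \<and> finite T \<and> T \<noteq> {}" and s: "sum id T = 0"
    have "(\<Sum>v\<in>T. scale3 1 v) = 0" using s by simp
    from V.independentD[OF I _ _ this] T show False by auto
  qed
next
  assume H: "\<forall>T. T \<subseteq> S \<and> finite T \<and> T \<noteq> {} \<longrightarrow> sum id T \<noteq> 0"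
  show "independent3 S"
    unfolding V.independent_explicit_finite_subsets
  proof (intro allI impI ballI)
    fix T u v assume T: "T \<subseteq> S" "finite T" and s: "(\<Sum>v\<in>T. scale3 (u v) v) = 0" and v: "v \<in> T"
    have "sum id {v\<in>T. u v = 1} = 0" using s sum_scale_bit[OF T(2)] by simp
    moreover have "{v\<in>T. u v = 1} \<subseteq> S" "finite {v\<in>T. u v = 1}" using T by auto
    ultimately have "{v\<in>T. u v = 1} = {}" using H by blast
    with v show "u v = 0" using bit_cases[of "u v"] by auto
  qed
qed

section \<open>Substitution is a ring homomorphism\<close>

definition mono3 :: "poly3 \<Rightarrow> poly3 \<Rightarrow> poly3 \<Rightarrow> nat \<times> nat \<times> nat \<Rightarrow> poly3" where
  "mono3 fx fy fz m = fx ^ fst m * fy ^ fst (snd m) * fz ^ snd (snd m)"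

lemma subst3_alt:
  "subst3 fx fy fz p = (\<Sum>m\<in>Poly_Mapping.keys p. const3 (Poly_Mapping.lookup p m) * mono3 fx fy fz m)"
  unfolding subst3_def mono3_def by (simp add: mult.assoc)

lemma subst3_superset:
  assumes "finite S" "Poly_Mapping.keys p \<subseteq> S"
  shows "subst3 fx fy fz p = (\<Sum>m\<in>S. const3 (Poly_Mapping.lookup p m) * mono3 fx fy fz m)"
  unfolding subst3_alt
  by (rule sum.mono_neutral_left) (use assms in \<open>auto simp: in_keys_iff\<close>)

lemma subst3_add: "subst3 fx fy fz (p + q) = subst3 fx fy fz p + subst3 fx fy fz q"
proof -
  let ?S = "Poly_Mapping.keys p \<union> Poly_Mapping.keys q"
  have f: "finite ?S" by simp
  have k: "Poly_Mapping.keys (p + q) \<subseteq> ?S" by (rule keys_add)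
  have kp: "Poly_Mapping.keys p \<subseteq> ?S" and kq: "Poly_Mapping.keys q \<subseteq> ?S" by auto
  show ?thesis
    unfolding subst3_superset[OF f k] subst3_superset[OF f kp] subst3_superset[OF f kq]
    by (simp add: lookup_add const3_add distrib_right sum.distrib del: add_bit_eq_xor)
qed

lemma subst3_zero[simp]: "subst3 fx fy fz 0 = 0"
  by (simp add: subst3_def)

lemma subst3_sum: "finite I \<Longrightarrow> subst3 fx fy fz (sum f I) = (\<Sum>i\<in>I. subst3 fx fy fz (f i))"
  by (induction I rule: finite_induct) (auto simp: subst3_add)

lemma subst3_single: "subst3 fx fy fz (Poly_Mapping.single m c) = const3 c * mono3 fx fy fz m"
  by (cases "c = 0") (simp_all add: subst3_alt)

lemma poly_expand: "p = (\<Sum>m\<in>Poly_Mapping.keys p. Poly_Mapping.single m (Poly_Mapping.lookup p m))"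
  by (rule poly_mapping_eqI)
     (simp add: lookup_sum lookup_single when_def in_keys_iff sum.delta' split: if_splits)

lemma mono3_add: "mono3 fx fy fz (m + n) = mono3 fx fy fz m * mono3 fx fy fz n"
  by (cases m; cases n) (simp add: mono3_def power_add algebra_simps)

lemma subst3_mult: "subst3 fx fy fz (p * q) = subst3 fx fy fz p * subst3 fx fy fz q"
proof -
  let ?s = "subst3 fx fy fz"
  have "p * q = (\<Sum>m\<in>Poly_Mapping.keys p. Poly_Mapping.single m (Poly_Mapping.lookup p m)) *
                (\<Sum>n\<in>Poly_Mapping.keys q. Poly_Mapping.single n (Poly_Mapping.lookup q n))"
    using poly_expand[of p] poly_expand[of q] by simp
  also have "\<dots> = (\<Sum>m\<in>Poly_Mapping.keys p. \<Sum>n\<in>Poly_Mapping.keys q.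
        Poly_Mapping.single (m + n) (Poly_Mapping.lookup p m * Poly_Mapping.lookup q n))"
    by (simp add: sum_distrib_left sum_distrib_right mult_single del: mult_bit_eq_and)
       (rule sum.swap)
  finally have "?s (p * q) = (\<Sum>m\<in>Poly_Mapping.keys p. \<Sum>n\<in>Poly_Mapping.keys q.
        const3 (Poly_Mapping.lookup p m * Poly_Mapping.lookup q n) * mono3 fx fy fz (m + n))"
    by (simp add: subst3_sum subst3_single)
  also have "\<dots> = (\<Sum>m\<in>Poly_Mapping.keys p. \<Sum>n\<in>Poly_Mapping.keys q.
        (const3 (Poly_Mapping.lookup p m) * mono3 fx fy fz m) * (const3 (Poly_Mapping.lookup q n) * mono3 fx fy fz n))"
    by (simp add: const3_mult mono3_add algebra_simps del: mult_bit_eq_and)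
  also have "\<dots> = ?s p * ?s q"
    by (simp add: subst3_alt sum_distrib_left sum_distrib_right) (rule sum.swap)
  finally show ?thesis .
qed

lemma subst3_const: "subst3 fx fy fz (const3 c) = const3 c"
  by (simp add: const3_def subst3_single mono3_def)

lemma subst3_one[simp]: "subst3 fx fy fz 1 = 1"
  using subst3_const[of fx fy fz 1] by simp

lemma subst3_X[simp]: "subst3 fx fy fz X = fx"
  by (simp add: X_def subst3_single mono3_def)
lemma subst3_Y[simp]: "subst3 fx fy fz Y = fy"
  by (simp add: Y_def subst3_single mono3_def)
lemma subst3_Z[simp]: "subst3 fx fy fz Z = fz"
  by (simp add: Z_def subst3_single mono3_def)

lemma subst3_power: "subst3 fx fy fz (p ^ n) = subst3 fx fy fz p ^ n"
  by (induction n) (simp_all add: subst3_mult)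

definition hom3 :: "(poly3 \<Rightarrow> poly3) \<Rightarrow> bool" where
  "hom3 g \<longleftrightarrow> (\<forall>p q. g (p + q) = g p + g q) \<and> (\<forall>p q. g (p * q) = g p * g q)
     \<and> (\<forall>c. g (const3 c) = const3 c)"

lemma hom3_subst3: "hom3 (subst3 fx fy fz)"
  by (simp add: hom3_def subst3_add subst3_mult subst3_const)

lemma hom3_comp: "hom3 g \<Longrightarrow> hom3 h \<Longrightarrow> hom3 (g \<circ> h)"
  by (simp add: hom3_def)

lemma hom_b: "hom3 act_b" and hom_c: "hom3 act_c" and hom_d: "hom3 act_d"
  by (simp_all add: act_b_def act_c_def act_d_def hom3_subst3)

lemma U3_hom: "g \<in> U3 \<Longrightarrow> hom3 g"
  apply (induction rule: U3.induct)
     apply (simp add: hom3_def)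
    apply (rule hom3_comp[OF hom_b], assumption)
   apply (rule hom3_comp[OF hom_c], assumption)
  apply (rule hom3_comp[OF hom_d], assumption)
  done

lemma U3_comp: "g \<in> U3 \<Longrightarrow> h \<in> U3 \<Longrightarrow> g \<circ> h \<in> U3"
  by (induction rule: U3.induct) (auto simp: comp_assoc intro: U3.intros)

lemma hom3_scale: "hom3 g \<Longrightarrow> g (scale3 c p) = scale3 c (g p)"
  by (simp add: hom3_def scale3_def)

lemma hom3_zero: "hom3 g \<Longrightarrow> g 0 = 0"
  using hom3_scale[of g 0 0] by simp

lemma hom3_one: "hom3 g \<Longrightarrow> g 1 = 1"
  unfolding hom3_def by (metis const3_1)

lemma hom3_power: "hom3 g \<Longrightarrow> g (p ^ n) = g p ^ n"
  by (induction n) (simp_all add: hom3_one, simp add: hom3_def)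

lemma hom3_span:
  assumes "hom3 g" "g ` S \<subseteq> span3 T"
  shows "g ` span3 S \<subseteq> span3 T"
proof
  fix y assume "y \<in> g ` span3 S"
  then obtain x where x: "x \<in> span3 S" "y = g x" by auto
  from x(1) have "g x \<in> span3 T"
  proof (induction rule: V.span_induct_alt)
    case base then show ?case using hom3_zero[OF assms(1)] by (simp add: V.span_zero)
  next
    case (step c a b)
    have "g (scale3 c a + b) = scale3 c (g a) + g b"
      using assms(1) by (simp add: hom3_def hom3_scale)
    then show ?case using step assms(2) by (auto intro!: V.span_add V.span_scale)
  qed
  then show "y \<in> span3 T" using x by simp
qed

lemma U3_invariant:
  assumes "act_b ` S \<subseteq> span3 S" "act_c ` S \<subseteq> span3 S" "act_d ` S \<subseteq> span3 S"
  shows "g \<in> U3 \<Longrightarrow> g ` span3 S \<subseteq> span3 S"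
proof (induction rule: U3.induct)
  case U3_id then show ?case by simp
next
  case (U3_b g)
  have "act_b ` span3 S \<subseteq> span3 S"
    by (rule hom3_span[OF hom_b assms(1)])
  then show ?case using U3_b by (auto simp: image_comp[symmetric])
next
  case (U3_c g)
  have "act_c ` span3 S \<subseteq> span3 S"
    by (rule hom3_span[OF hom_c assms(2)])
  then show ?case using U3_c by (auto simp: image_comp[symmetric])
next
  case (U3_d g)
  have "act_d ` span3 S \<subseteq> span3 S"
    by (rule hom3_span[OF hom_d assms(3)])
  then show ?case using U3_d by (auto simp: image_comp[symmetric])
qed

lemma kU3_submodule_span:
  assumes "act_b ` S \<subseteq> span3 S" "act_c ` S \<subseteq> span3 S" "act_d ` S \<subseteq> span3 S"
  shows "kU3_submodule (span3 S)"
  unfolding kU3_submodule_def using U3_invariant[OF assms] by auto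

lemmas act_simps = act_b_def act_c_def act_d_def subst3_add subst3_mult subst3_power

definition qq :: poly3 where "qq = Z ^ 2 + X * Z"
definition rr :: poly3 where "rr = Z ^ 2 + Y * Z"

lemma act_d4: "act_b d4 = d4" "act_c d4 = d4" "act_d d4 = d4"
  by (simp_all add: act_simps d4_def algebra_simps)
lemma act_d2: "act_b d2 = d2" "act_c d2 = d2" "act_d d2 = d2"
  by (simp_all add: act_simps d2_def algebra_simps power2_eq_square)
lemma act_X: "act_b X = X" "act_c X = X" "act_d X = X"
  by (simp_all add: act_simps)
lemma act_Y: "act_b Y = Y + X" "act_c Y = Y" "act_d Y = Y"
  by (simp_all add: act_simps)
lemma act_Z: "act_b Z = Z" "act_c Z = Z + X" "act_d Z = Z + Y"
  by (simp_all add: act_simps)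
lemma act_qq: "act_b qq = qq" "act_c qq = qq" "act_d qq = qq + d2"
  by (simp_all add: act_simps qq_def d2_def algebra_simps power2_eq_square)
lemma act_rr: "act_b rr = rr + X * Z" "act_c rr = rr + X^2 + X * Y" "act_d rr = rr"
  by (simp_all add: act_simps rr_def algebra_simps power2_eq_square)
lemma act_XZ: "act_b (X*Z) = X * Z" "act_c (X*Z) = X*Z + X^2" "act_d (X*Z) = X*Z + X*Y"
  by (simp_all add: act_simps algebra_simps power2_eq_square)
lemma act_XY: "act_b (X*Y) = X * Y + X^2" "act_c (X*Y) = X*Y" "act_d (X*Y) = X*Y"
  by (simp_all add: act_simps algebra_simps power2_eq_square)
lemma act_XX: "act_b (X^2) = X^2" "act_c (X^2) = X^2" "act_d (X^2) = X^2"
  by (simp_all add: act_simps)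

section \<open>The modules as spans of explicit generating sets\<close>

lemma span_add1: "a \<in> span3 S \<Longrightarrow> b \<in> S \<Longrightarrow> a + b \<in> span3 S"
  by (rule V.span_add[OF _ V.span_base])
lemma span_base': "a \<in> S \<Longrightarrow> a \<in> span3 S"
  by (rule V.span_base)

lemma orbit_sub:
  assumes "f \<in> S" "act_b ` S \<subseteq> span3 S" "act_c ` S \<subseteq> span3 S" "act_d ` S \<subseteq> span3 S"
  shows "span3 {g f | g. g \<in> U3} \<subseteq> span3 S"
proof (rule V.span_minimal)
  show "{g f | g. g \<in> U3} \<subseteq> span3 S"
  proof safe
    fix g assume "g \<in> U3"
    then have "g ` span3 S \<subseteq> span3 S" by (rule U3_invariant[OF assms(2-4)])
    moreover have "f \<in> span3 S" using assms(1) by (rule V.span_base)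
    ultimately show "g f \<in> span3 S" by auto
  qed
qed simp

lemma span_sub_span: "S \<subseteq> span3 T \<Longrightarrow> span3 S \<subseteq> span3 T"
  by (rule V.span_minimal) simp_all

lemma Kmod_eq: "Kmod = span3 {qq, d2}"
proof
  show "Kmod \<subseteq> span3 {qq, d2}"
    unfolding Kmod_def kU3_generated_def qq_def[symmetric]
    by (rule orbit_sub) (auto simp: act_qq act_d2 V.span_base intro!: span_add1)
  have "act_d \<in> U3" using U3.U3_d[OF U3.U3_id] by simp
  then have ad: "act_d qq \<in> Kmod"
    unfolding Kmod_def kU3_generated_def qq_def[symmetric]
    by (auto intro!: V.span_base exI[of _ act_d])
  have qK: "qq \<in> Kmod"
    unfolding Kmod_def kU3_generated_def qq_def[symmetric]
    by (auto intro!: V.span_base exI[of _ id] U3.U3_id)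
  have "qq + act_d qq \<in> Kmod" using qK ad unfolding Kmod_def kU3_generated_def by (rule V.span_add)
  then have "d2 \<in> Kmod" by (simp add: act_qq)
  with \<open>qq \<in> Kmod\<close> show "span3 {qq, d2} \<subseteq> Kmod"
    unfolding Kmod_def kU3_generated_def by (intro span_sub_span) auto
qed

lemma Nmod_eq: "Nmod = span3 {rr, X * Z, X * Y, X ^ 2}"
proof
  show "Nmod \<subseteq> span3 {rr, X * Z, X * Y, X ^ 2}"
    unfolding Nmod_def kU3_generated_def rr_def[symmetric]
    by (rule orbit_sub) (auto simp: act_rr act_XZ act_XY act_XX V.span_base intro!: span_add1)
  let ?G = "{g rr | g. g \<in> U3}"
  have Nd: "Nmod = span3 ?G" unfolding Nmod_def kU3_generated_def rr_def ..
  have b: "act_b \<in> U3" using U3.U3_b[OF U3.U3_id] by simp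
  have c: "act_c \<in> U3" using U3.U3_c[OF U3.U3_id] by simp
  have bc: "act_b \<circ> act_c \<in> U3" using U3.U3_b[OF c] .
  have m1: "rr \<in> Nmod" unfolding Nd by (auto intro!: V.span_base exI[of _ id] U3.U3_id)
  have m2: "act_b rr \<in> Nmod" unfolding Nd using b by (auto intro!: V.span_base)
  have m3: "act_c rr \<in> Nmod" unfolding Nd using c by (auto intro!: V.span_base)
  have m4: "act_b (act_c rr) \<in> Nmod" unfolding Nd using bc
    by (auto intro!: V.span_base exI[of _ "act_b \<circ> act_c"])
  have e4: "act_b (act_c rr) = rr + X * Z + X * Y"
    unfolding act_rr(2) by (simp add: act_simps rr_def algebra_simps power2_eq_square)
  have s: "subspace3 Nmod" unfolding Nd by simp
  have XZ: "X * Z \<in> Nmod" using V.subspace_add[OF s m1 m2] by (simp add: act_rr)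
  have m4': "rr + X * Z + X * Y \<in> Nmod" using m4 unfolding e4 .
  have XY: "X * Y \<in> Nmod" using V.subspace_add[OF s m2 m4'] by (simp add: act_rr)
  have XX: "X ^ 2 \<in> Nmod" using V.subspace_add[OF s XY V.subspace_add[OF s m1 m3]] by (simp add: act_rr)
  show "span3 {rr, X * Z, X * Y, X ^ 2} \<subseteq> Nmod"
    unfolding Nd by (intro span_sub_span) (use m1 XZ XY XX in \<open>auto simp: Nd\<close>)
qed

definition EA :: "poly3 set" where "EA = range (\<lambda>i. d4 ^ i)"
definition EB :: "poly3 set" where "EB = range (\<lambda>j. d2 ^ j) \<union> range (\<lambda>j. d2 ^ j * qq)"
definition EC :: "poly3 set" where
  "EC = range (\<lambda>k. X ^ k) \<union> range (\<lambda>k. X ^ k * Y) \<union> range (\<lambda>k. X ^ k * Z) \<union> range (\<lambda>k. X ^ k * rr)"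

lemma EB_mem: "d2 ^ j \<in> EB" "d2 ^ j * qq \<in> EB"
  by (auto simp: EB_def)
lemma EC_mem: "X ^ k \<in> EC" "X ^ k * Y \<in> EC" "X ^ k * Z \<in> EC" "X ^ k * rr \<in> EC"
  by (auto simp: EC_def)

lemma kconst_sub: "1 \<in> S \<Longrightarrow> kconst \<subseteq> span3 S"
  unfolding kconst_def by (rule span_sub_span) (auto intro: V.span_base)

lemma Bmod_eq: "Bmod = span3 EB"
proof
  show "Bmod \<subseteq> span3 EB"
    unfolding Bmod_def
  proof (rule span_sub_span, safe)
    fix x assume "x \<in> kconst"
    moreover have "kconst \<subseteq> span3 EB" by (rule kconst_sub) (metis EB_mem(1) power_0)
    ultimately show "x \<in> span3 EB" by auto
  next
    fix i p assume "p \<in> Kmod"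
    then have "p \<in> span3 {qq, d2}" by (simp add: Kmod_eq)
    then show "d2 ^ i * p \<in> span3 EB"
    proof (rule span_mult_closed)
      fix s assume "s \<in> {qq, d2}"
      moreover have "d2 ^ i * d2 \<in> EB" by (metis EB_mem(1) power_Suc2)
      ultimately show "d2 ^ i * s \<in> span3 EB" by (auto intro!: V.span_base EB_mem)
    qed
  qed
  have K: "qq \<in> Kmod" "d2 \<in> Kmod" by (auto simp: Kmod_eq intro: V.span_base)
  show "span3 EB \<subseteq> Bmod"
    unfolding Bmod_def
  proof (rule span_sub_span, rule subsetI)
    fix p assume "p \<in> EB"
    then consider j where "p = d2 ^ j" | j where "p = d2 ^ j * qq" by (auto simp: EB_def)
    then show "p \<in> span3 (kconst \<union> (\<Union>i. (\<lambda>p. d2 ^ i * p) ` Kmod))"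
    proof cases
      case 1
      show ?thesis
      proof (cases j)
        case 0
        then show ?thesis using 1 by (auto simp: kconst_def intro!: V.span_base)
      next
        case (Suc j')
        then have "p = d2 ^ j' * d2" using 1 by (simp add: power_Suc2)
        then show ?thesis using K by (auto intro!: V.span_base)
      qed
    next
      case 2 then show ?thesis using K by (auto intro!: V.span_base)
    qed
  qed
qed

lemma XEC: "s \<in> {rr, X * Z, X * Y, X ^ 2} \<Longrightarrow> X ^ i * s \<in> span3 EC"
proof -
  assume "s \<in> {rr, X * Z, X * Y, X ^ 2}"
  moreover have "X ^ i * (X * Z) \<in> EC" by (metis EC_mem(3) power_Suc2 mult.assoc)
  moreover have "X ^ i * (X * Y) \<in> EC" by (metis EC_mem(2) power_Suc2 mult.assoc)
  moreover have "X ^ i * X ^ 2 \<in> EC" by (metis EC_mem(1) power_add)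
  ultimately show "X ^ i * s \<in> span3 EC" by (auto intro!: V.span_base EC_mem)
qed

lemma Cmod_eq: "Cmod = span3 EC"
proof
  show "Cmod \<subseteq> span3 EC"
    unfolding Cmod_def d1_def
  proof (rule span_sub_span, rule subsetI)
    fix x assume "x \<in> kconst \<union> Mnat \<union> (\<Union>i. (\<lambda>p. X ^ i * p) ` Nmod)"
    then consider "x \<in> kconst" | "x \<in> Mnat" | i p where "p \<in> Nmod" "x = X ^ i * p" by blast
    then show "x \<in> span3 EC"
    proof cases
      case 1
      moreover have "kconst \<subseteq> span3 EC" by (rule kconst_sub) (metis EC_mem(1) power_0)
      ultimately show ?thesis by auto
    next
      case 2
      moreover have "Mnat \<subseteq> span3 EC" unfolding Mnat_def
        by (rule span_sub_span) (auto intro!: V.span_base,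
            metis EC_mem(1) power_one_right, metis EC_mem(2) power_0 mult_1,
            metis EC_mem(3) power_0 mult_1)
      ultimately show ?thesis by auto
    next
      case 3
      then have "p \<in> span3 {rr, X * Z, X * Y, X ^ 2}" by (simp add: Nmod_eq)
      then have "X ^ i * p \<in> span3 EC"
        by (rule span_mult_closed) (rule XEC)
      then show ?thesis using 3 by simp
    qed
  qed
  have N: "rr \<in> Nmod" "X * Z \<in> Nmod" "X * Y \<in> Nmod" "X ^ 2 \<in> Nmod"
    by (auto simp: Nmod_eq intro: V.span_base)
  have M: "X \<in> Mnat" "Y \<in> Mnat" "Z \<in> Mnat" by (auto simp: Mnat_def intro: V.span_base)
  have one: "1 \<in> kconst" by (auto simp: kconst_def intro: V.span_base)
  let ?G = "kconst \<union> Mnat \<union> (\<Union>i. (\<lambda>p. X ^ i * p) ` Nmod)"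
  have G: "\<And>p i. p \<in> Nmod \<Longrightarrow> X ^ i * p \<in> span3 ?G" by (auto intro!: V.span_base)
  have G2: "\<And>p. p \<in> kconst \<union> Mnat \<Longrightarrow> p \<in> span3 ?G" by (auto intro!: V.span_base)
  show "span3 EC \<subseteq> Cmod"
    unfolding Cmod_def d1_def
  proof (rule span_sub_span, rule subsetI)
    fix p assume "p \<in> EC"
    then consider k where "p = X ^ k" | k where "p = X ^ k * Y" | k where "p = X ^ k * Z"
      | k where "p = X ^ k * rr" by (auto simp: EC_def)
    then show "p \<in> span3 ?G"
    proof cases
      case 1
      then consider "k = 0" | "k = 1" | k' where "k = k' + 2" by (metis One_nat_def add_2_eq_Suc' not0_implies_Suc)
      then show ?thesis
      proof cases
        case 3
        then have "p = X ^ k' * X ^ 2" using 1 by (simp add: power_add power2_eq_square mult.commute)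
        then show ?thesis using G[OF N(4)] by simp
      qed (use 1 G2 one M in auto)
    next
      case 2
      then consider "k = 0" | k' where "k = k' + 1" by (metis Suc_eq_plus1 not0_implies_Suc)
      then show ?thesis
        by cases (use 2 G2 M G[OF N(3)] in \<open>auto simp: ac_simps\<close>)
    next
      case 3
      then consider "k = 0" | k' where "k = k' + 1" by (metis Suc_eq_plus1 not0_implies_Suc)
      then show ?thesis
        by cases (use 3 G2 M G[OF N(2)] in \<open>auto simp: ac_simps\<close>)
    next
      case 4 then show ?thesis using G[OF N(1)] by auto
    qed
  qed
qed

lemma XEC2: "s \<in> {1, X, Y, Z, rr, X * Z, X * Y, X ^ 2} \<Longrightarrow> X ^ i * s \<in> span3 EC"
proof -
  assume "s \<in> {1, X, Y, Z, rr, X * Z, X * Y, X ^ 2}"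
  moreover have "X ^ i * X \<in> EC" by (metis EC_mem(1) power_Suc2)
  moreover have "X ^ i * 1 \<in> EC" by (metis EC_mem(1) mult_1_right)
  ultimately show ?thesis using XEC[of s i] by (auto intro: V.span_base EC_mem)
qed

lemma acts_props:
  assumes "h \<in> {act_b, act_c, act_d}"
  shows "hom3 h" "h d4 = d4" "h d2 = d2" "h X = X" "h qq \<in> span3 {qq, d2}"
    "h Y \<in> span3 {1, X, Y, Z, rr, X * Z, X * Y, X ^ 2}"
    "h Z \<in> span3 {1, X, Y, Z, rr, X * Z, X * Y, X ^ 2}"
    "h rr \<in> span3 {1, X, Y, Z, rr, X * Z, X * Y, X ^ 2}"
  using assms
  by (auto simp: hom_b hom_c hom_d act_d4 act_d2 act_X act_qq act_Y act_Z act_rr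
      V.span_base intro!: span_add1)

lemma acts_inv:
  assumes h: "h \<in> {act_b, act_c, act_d}"
  shows "h ` EA \<subseteq> span3 EA" "h ` EB \<subseteq> span3 EB" "h ` EC \<subseteq> span3 EC"
proof -
  note P = acts_props[OF h]
  have hm: "h (a * b) = h a * h b" for a b using P(1) by (simp add: hom3_def)
  have hp: "h (a ^ n) = h a ^ n" for a n using P(1) by (rule hom3_power)
  show "h ` EA \<subseteq> span3 EA"
    by (auto simp: EA_def hp P(2) intro!: V.span_base)
  show "h ` EB \<subseteq> span3 EB"
  proof safe
    fix p assume "p \<in> EB"
    then consider j where "p = d2 ^ j" | j where "p = d2 ^ j * qq" by (auto simp: EB_def)
    then show "h p \<in> span3 EB"
    proof cases
      case 1 then show ?thesis by (simp add: hp P(3) V.span_base EB_mem)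
    next
      case 2
      then have "h p = d2 ^ j * h qq" by (simp add: hm hp P(3))
      moreover have "d2 ^ j * h qq \<in> span3 EB"
      proof (rule span_mult_closed[OF P(5)])
        fix s assume "s \<in> {qq, d2}"
        moreover have "d2 ^ j * d2 \<in> EB" by (metis EB_mem(1) power_Suc2)
        ultimately show "d2 ^ j * s \<in> span3 EB" by (auto intro!: V.span_base EB_mem)
      qed
      ultimately show ?thesis by simp
    qed
  qed
  show "h ` EC \<subseteq> span3 EC"
  proof safe
    fix p assume "p \<in> EC"
    then consider k e where "p = X ^ k * e" "e \<in> {1, Y, Z, rr}"
      by (auto simp: EC_def) (metis mult_1_right)
    then show "h p \<in> span3 EC"
    proof cases
      case 1
      then have hp': "h p = X ^ k * h e" by (simp add: hm hp P(4))
      have "h e \<in> span3 {1, X, Y, Z, rr, X * Z, X * Y, X ^ 2}"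
        using 1(2) P(6-8) hom3_one[OF P(1)] by (auto intro: V.span_base)
      then have "X ^ k * h e \<in> span3 EC" by (rule span_mult_closed) (rule XEC2)
      then show ?thesis using hp' by simp
    qed
  qed
qed

lemma submodules: "kU3_submodule Amod" "kU3_submodule Bmod" "kU3_submodule Cmod"
  unfolding Amod_def EA_def[symmetric] Bmod_eq Cmod_eq
  by (rule kU3_submodule_span; rule acts_inv; simp)+

definition md :: "nat \<times> nat \<times> nat \<Rightarrow> nat" where "md m = fst m + fst (snd m) + snd (snd m)"

definition DB :: "nat \<Rightarrow> poly3 \<Rightarrow> bool" where
  "DB n p \<longleftrightarrow> (\<forall>m\<in>Poly_Mapping.keys p. md m \<le> n)"

lemma md_add: "md (m + m') = md m + md m'"
  by (cases m; cases m') (simp add: md_def)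

lemma DB_mult: "DB a p \<Longrightarrow> DB b q \<Longrightarrow> DB (a + b) (p * q)"
  unfolding DB_def
proof
  fix m assume H: "\<forall>m\<in>Poly_Mapping.keys p. md m \<le> a" "\<forall>m\<in>Poly_Mapping.keys q. md m \<le> b"
    and m: "m \<in> Poly_Mapping.keys (p * q)"
  then obtain u v where "m = u + v" "u \<in> Poly_Mapping.keys p" "v \<in> Poly_Mapping.keys q"
    using keys_mult[of p q] by blast
  then show "md m \<le> a + b" using H by (simp add: md_add add_mono)
qed

lemma DB_add: "DB a p \<Longrightarrow> DB a q \<Longrightarrow> DB a (p + q)"
  unfolding DB_def using keys_add[of p q] by auto

lemma DB_mono: "DB a p \<Longrightarrow> a \<le> b \<Longrightarrow> DB b p"
  unfolding DB_def by force

lemma DB_one: "DB 0 1"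
  by (simp add: DB_def md_def zero3)

lemma DB_power: "DB a p \<Longrightarrow> DB (a * n) (p ^ n)"
  by (induction n) (simp_all add: DB_one, metis DB_mult add.commute)

lemma DB_XYZ: "DB 1 X" "DB 1 Y" "DB 1 Z"
  by (simp_all add: DB_def md_def X_def Y_def Z_def)

lemma DB_polys: "DB 2 qq" "DB 2 rr" "DB 2 d2" "DB 4 d4"
proof -
  have z2: "DB 2 (Z^2)" "DB 2 (Y^2)" using DB_power[OF DB_XYZ(3), of 2] DB_power[OF DB_XYZ(2), of 2] by simp_all
  have m: "DB 2 (A * B)" if "DB 1 A" "DB 1 B" for A B using DB_mult[OF that] by (simp add: numeral_2_eq_2)
  show "DB 2 qq" unfolding qq_def by (intro DB_add z2 m DB_XYZ)
  show "DB 2 rr" unfolding rr_def by (intro DB_add z2 m DB_XYZ)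
  show "DB 2 d2" unfolding d2_def by (intro DB_add z2 m DB_XYZ)
  have s: "DB 1 (A + B)" if "DB 1 A" "DB 1 B" for A B by (intro DB_add that)
  have "DB (1+1+1+1) d4" unfolding d4_def by (intro DB_mult s DB_XYZ)
  then show "DB 4 d4" by (simp add: eval_nat_numeral)
qed

lemma single1_inj: "Poly_Mapping.single m (1::bit) = Poly_Mapping.single m' 1 \<Longrightarrow> m = m'"
  by (metis lookup_single_eq lookup_single_not_eq zero_neq_one)

definition mons :: "nat \<Rightarrow> poly3 set" where
  "mons n = (\<lambda>m. Poly_Mapping.single m 1) ` {m. md m \<le> n}"

lemma scale3_single: "scale3 c (Poly_Mapping.single m 1) = Poly_Mapping.single m c"
  by (simp add: scale3_def const3_def mult_single zero3[symmetric])

lemma DB_span: "DB n p \<Longrightarrow> p \<in> span3 (mons n)"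
proof -
  assume "DB n p"
  have "p = (\<Sum>m\<in>Poly_Mapping.keys p. scale3 (Poly_Mapping.lookup p m) (Poly_Mapping.single m 1))"
    by (subst poly_expand) (simp add: scale3_single)
  also have "\<dots> \<in> span3 (mons n)"
    using \<open>DB n p\<close> by (intro V.span_sum V.span_scale V.span_base) (auto simp: mons_def DB_def)
  finally show ?thesis .
qed

lemma finite_md: "finite {m. md m \<le> n}"
proof (rule finite_subset)
  show "{m. md m \<le> n} \<subseteq> {..n} \<times> {..n} \<times> {..n}" by (auto simp: md_def)
qed simp

lemma monos_card: "card (mons n) = card {m. md m \<le> n}" "finite (mons n)"
proof -
  have "inj_on (\<lambda>m. Poly_Mapping.single m (1::bit)) {m. md m \<le> n}"
    by (auto simp: inj_on_def dest: single1_inj)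
  then show "card (mons n) = card {m. md m \<le> n}" unfolding mons_def by (rule card_image)
  show "finite (mons n)" unfolding mons_def using finite_md by simp
qed

lemma monos_indep: "independent3 (mons n)"
  unfolding indep_iff
proof (intro allI impI)
  fix T assume T: "T \<subseteq> mons n \<and> finite T \<and> T \<noteq> {}"
  then obtain p0 where p0: "p0 \<in> T" by auto
  then obtain m0 where m0: "p0 = Poly_Mapping.single m0 1" using T unfolding mons_def by blast
  have "Poly_Mapping.lookup (sum id T) m0 = (\<Sum>p\<in>T. Poly_Mapping.lookup p m0)"
    by (simp add: lookup_sum)
  also have "\<dots> = (\<Sum>p\<in>T. if p = p0 then 1 else 0)"
  proof (rule sum.cong)
    fix p assume "p \<in> T"
    then obtain m where "p = Poly_Mapping.single m 1" using T unfolding mons_def by blast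
    then show "Poly_Mapping.lookup p m0 = (if p = p0 then 1 else 0)"
      using m0 by (auto simp: lookup_single when_def dest: single1_inj)
  qed simp
  also have "\<dots> = 1" using T p0 by (simp add: sum.delta)
  finally show "sum id T \<noteq> 0" by auto
qed

lemma single_monomial: "Poly_Mapping.single (a, b, c) 1 = X ^ a * Y ^ b * Z ^ c"
proof -
  have x: "X ^ a = Poly_Mapping.single (a, 0, 0) 1" for a
    by (induction a) (simp_all add: X_def mult_single zero3[symmetric] power_Suc2)
  have y: "Y ^ b = Poly_Mapping.single (0, b, 0) 1" for b
    by (induction b) (simp_all add: Y_def mult_single zero3[symmetric] power_Suc2)
  have z: "Z ^ c = Poly_Mapping.single (0, 0, c) 1" for c
    by (induction c) (simp_all add: Z_def mult_single zero3[symmetric] power_Suc2)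
  show ?thesis by (simp add: x y z mult_single)
qed

section \<open>The candidate basis of k[x,y,z]\<close>

type_synonym idx = "nat \<times> nat \<times> nat \<times> nat \<times> nat"

definition eB :: "nat \<Rightarrow> poly3" where "eB e = (if e = 0 then 1 else qq)"
definition eC :: "nat \<Rightarrow> poly3" where
  "eC f = (if f = 0 then 1 else if f = 1 then Y else if f = 2 then Z else rr)"
definition dC :: "nat \<Rightarrow> nat" where "dC f = (if f = 0 then 0 else if f = 3 then 2 else 1)"
definition valid :: "idx \<Rightarrow> bool" where "valid t = (case t of (i,j,e,k,f) \<Rightarrow> e < 2 \<and> f < 4)"
definition degt :: "idx \<Rightarrow> nat" where
  "degt t = (case t of (i,j,e,k,f) \<Rightarrow> 4*i + 2*j + 2*e + k + dC f)"
definition PP :: "idx \<Rightarrow> poly3" where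
  "PP t = (case t of (i,j,e,k,f) \<Rightarrow> d4 ^ i * (d2 ^ j * eB e) * (X ^ k * eC f))"
definition Tn :: "nat \<Rightarrow> idx set" where "Tn n = {t. valid t \<and> degt t \<le> n}"
definition trm :: "idx \<Rightarrow> poly3" where
  "trm l = (case l of (a,b,e,c,f) \<Rightarrow> d4 ^ a * d2 ^ b * X ^ c * eB e * eC f)"
definition vv :: "nat \<Rightarrow> poly3" where "vv v = (if v = 0 then X else if v = 1 then Y else Z)"
definition shift :: "idx \<Rightarrow> idx \<Rightarrow> idx" where
  "shift t l = (case t of (i,j,_,k,_) \<Rightarrow> case l of (a,b,e,c,f) \<Rightarrow> (i+a, j+b, e, k+c, f))"

definition Lt :: "nat \<Rightarrow> nat \<Rightarrow> nat \<Rightarrow> idx list" where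
  "Lt v e f = (if v = 0 then [(0,0,e,1,f)]
   else if v = 1 then (if e = 0 then (if f = 0 then [(0,0,0,0,1)] else if f = 1 then [(0,1,0,0,0), (0,0,0,1,1)] else if f = 2 then [(0,0,0,0,3), (0,0,1,0,0), (0,0,0,1,2)] else [(0,0,1,0,1), (0,1,0,0,2)])
     else (if f = 0 then [(0,0,1,0,1)] else if f = 1 then [(0,1,1,0,0), (0,0,1,1,1)] else if f = 2 then [(0,0,1,0,3), (1,0,0,0,0), (0,1,1,0,0), (0,0,1,1,2)] else [(1,0,0,0,1), (0,1,1,0,1), (0,1,1,0,2)]))
   else (if e = 0 then (if f = 0 then [(0,0,0,0,2)] else if f = 1 then [(0,0,0,0,3), (0,0,1,0,0), (0,0,0,1,2)] else if f = 2 then [(0,0,1,0,0), (0,0,0,1,2)] else [(0,0,1,0,2), (0,0,1,0,1), (0,0,0,1,3)])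
     else (if f = 0 then [(0,0,1,0,2)] else if f = 1 then [(0,0,1,0,3), (1,0,0,0,0), (0,1,1,0,0), (0,0,1,1,2)] else if f = 2 then [(1,0,0,0,0), (0,1,1,0,0), (0,0,1,1,2)] else [(1,0,0,0,2), (1,0,0,0,1), (0,1,1,0,2), (0,1,1,0,1), (0,0,1,1,3)])))"

lemma cases4: "(f::nat) < 4 \<Longrightarrow> f = 0 \<or> f = 1 \<or> f = 2 \<or> f = 3" by auto
lemma cases3: "(f::nat) < 3 \<Longrightarrow> f = 0 \<or> f = 1 \<or> f = 2" by auto
lemma cases2: "(f::nat) < 2 \<Longrightarrow> f = 0 \<or> f = 1" by auto

lemma Lt_ok:
  assumes "v < 3" "e < 2" "f < 4" "l \<in> set (Lt v e f)"
  shows "valid l \<and> degt l = 2 * e + dC f + 1"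
  using cases3[OF assms(1)] cases2[OF assms(2)] cases4[OF assms(3)] assms(4)
  by (auto simp: Lt_def valid_def degt_def dC_def)

lemma Lt_eq:
  assumes "v < 3" "e < 2" "f < 4"
  shows "vv v * eB e * eC f = sum_list (map trm (Lt v e f))"
  using cases3[OF assms(1)] cases2[OF assms(2)] cases4[OF assms(3)]
  by (auto simp: Lt_def trm_def vv_def eB_def eC_def qq_def rr_def d2_def d4_def
      algebra_simps power2_eq_square)

lemma sum_list_span: "(\<And>x. x \<in> set xs \<Longrightarrow> x \<in> span3 S) \<Longrightarrow> sum_list xs \<in> span3 S"
  by (induction xs) (auto intro: V.span_add V.span_zero)

lemma PP_shift: "PP (shift (i,j,e,k,f) l) = d4 ^ i * d2 ^ j * X ^ k * trm l"
  by (cases l) (simp add: PP_def shift_def trm_def power_add algebra_simps)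

lemma degt_shift: "degt (shift (i,j,e,k,f) l) = 4*i + 2*j + k + degt l"
  by (cases l) (simp add: degt_def shift_def)

lemma valid_shift: "valid (shift t l) = valid l"
  by (cases t; cases l) (simp add: valid_def shift_def)

lemma mult_PP:
  assumes "valid t" "v < 3"
  shows "vv v * PP t \<in> span3 (PP ` Tn (Suc (degt t)))"
proof -
  obtain i j e k f where t: "t = (i,j,e,k,f)" by (cases t) auto
  have ef: "e < 2" "f < 4" using assms(1) t by (auto simp: valid_def)
  have "vv v * PP t = d4 ^ i * d2 ^ j * X ^ k * (vv v * eB e * eC f)"
    by (simp add: t PP_def algebra_simps)
  also have "\<dots> = sum_list (map (\<lambda>l. PP (shift t l)) (Lt v e f))"
    unfolding Lt_eq[OF assms(2) ef] t PP_shift by (simp add: sum_list_const_mult)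
  also have "\<dots> \<in> span3 (PP ` Tn (Suc (degt t)))"
  proof (rule sum_list_span)
    fix x assume "x \<in> set (map (\<lambda>l. PP (shift t l)) (Lt v e f))"
    then obtain l where l: "l \<in> set (Lt v e f)" "x = PP (shift t l)" by auto
    note ok = Lt_ok[OF assms(2) ef l(1)]
    have d1: "degt (shift t l) = 4*i + 2*j + k + degt l" unfolding t by (rule degt_shift)
    have d2: "degt t = 4*i + 2*j + 2*e + k + dC f" by (simp add: t degt_def)
    have "shift t l \<in> Tn (Suc (degt t))"
      unfolding Tn_def using ok d1 d2 by (simp add: valid_shift)
    then show "x \<in> span3 (PP ` Tn (Suc (degt t)))" using l(2) by (auto intro: V.span_base)
  qed
  finally show ?thesis .
qed

lemma Tn_mono: "n \<le> m \<Longrightarrow> Tn n \<subseteq> Tn m"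
  by (auto simp: Tn_def)

lemma span_vv:
  assumes "p \<in> span3 (PP ` Tn n)" "v < 3"
  shows "vv v * p \<in> span3 (PP ` Tn (Suc n))"
  using assms(1)
proof (rule span_mult_closed)
  fix s assume "s \<in> PP ` Tn n"
  then obtain t where t: "t \<in> Tn n" "s = PP t" by auto
  then have "vv v * s \<in> span3 (PP ` Tn (Suc (degt t)))"
    using mult_PP[OF _ assms(2)] by (auto simp: Tn_def)
  moreover have "span3 (PP ` Tn (Suc (degt t))) \<subseteq> span3 (PP ` Tn (Suc n))"
    using t by (intro V.span_mono image_mono Tn_mono) (auto simp: Tn_def)
  ultimately show "vv v * s \<in> span3 (PP ` Tn (Suc n))" by auto
qed

lemma PP_one: "PP (0,0,0,0,0) = 1" and T0: "(0,0,0,0,0) \<in> Tn 0"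
  by (simp_all add: PP_def eB_def eC_def Tn_def valid_def degt_def dC_def)

lemma monomial_span: "X ^ a * Y ^ b * Z ^ c \<in> span3 (PP ` Tn (a + b + c))"
proof -
  have z: "Z ^ c \<in> span3 (PP ` Tn c)" for c
  proof (induction c)
    case 0 then show ?case using PP_one T0 by (auto intro!: V.span_base image_eqI[of _ _ "(0,0,0,0,0)"])
  next
    case (Suc c) then show ?case using span_vv[of _ c 2] by (simp add: vv_def)
  qed
  have yz: "Y ^ b * Z ^ c \<in> span3 (PP ` Tn (b + c))" for b
  proof (induction b)
    case 0 then show ?case using z by simp
  next
    case (Suc b) then show ?case using span_vv[of _ "b + c" 1] by (simp add: vv_def mult.assoc)
  qed
  show ?thesis
  proof (induction a)
    case 0 then show ?case using yz by simp
  next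
    case (Suc a) then show ?case using span_vv[of _ "a + b + c" 0] by (simp add: vv_def mult.assoc)
  qed
qed



section \<open>Counting\<close>

definition sig :: "idx \<Rightarrow> nat \<times> nat \<times> nat" where
  "sig t = (case t of (i,j,e,k,f) \<Rightarrow> (k, 2*j + f mod 2, 4*i + 2*e + f div 2))"
definition sinv :: "nat \<times> nat \<times> nat \<Rightarrow> idx" where
  "sinv m = (case m of (a,b,c) \<Rightarrow> (c div 4, b div 2, (c mod 4) div 2, a, 2*(c mod 2) + b mod 2))"

lemma sinv_sig: "valid t \<Longrightarrow> sinv (sig t) = t"
proof -
  assume "valid t"
  then obtain i j e k f where t: "t = (i,j,e,k,f)" "e < 2" "f < 4" by (cases t) (auto simp: valid_def)
  have d4: "(4 * i + r) div 4 = i" "(4 * i + r) mod 4 = r" if "r < 4" for i r :: nat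
    using that by simp_all
  have d2: "(2 * i + r) div 2 = i" "(2 * i + r) mod 2 = r" if "r < 2" for i r :: nat
    using that by simp_all
  have m2: "(4 * i + r) mod 2 = r mod 2" for i r :: nat by presburger
  have "(4 * i + 2 * e + f div 2) div 4 = i" "(4 * i + 2 * e + f div 2) mod 4 div 2 = e"
    "(4 * i + 2 * e + f div 2) mod 2 = f div 2" "(2 * j + f mod 2) div 2 = j" "(2 * j + f mod 2) mod 2 = f mod 2"
    using cases2[OF t(2)] cases4[OF t(3)] by (auto simp: d4 d2 add.assoc m2)
  moreover have "2 * (f div 2) + f mod 2 = f" by simp
  ultimately show ?thesis unfolding t(1) sinv_def sig_def by simp
qed

lemma sig_sinv: "sig (sinv m) = m"
proof -
  obtain a b c where m: "m = (a,b,c)" by (cases m) auto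
  have b2: "b mod 2 < 2" by simp
  have e1: "(2 * (c mod 2) + b mod 2) mod 2 = b mod 2" "(2 * (c mod 2) + b mod 2) div 2 = c mod 2"
    using cases2[OF b2] by auto
  have "2 * (b div 2) + (2 * (c mod 2) + b mod 2) mod 2 = b" using e1 by simp
  moreover have cm: "c mod 2 = c mod 4 mod 2" by (simp add: mod_mod_cancel)
  have c4: "c mod 4 < 4" by simp
  have "2 * (c mod 4 div 2) + c mod 2 = c mod 4" using cases4[OF c4] cm by auto
  then have "4 * (c div 4) + 2 * (c mod 4 div 2) + (2 * (c mod 2) + b mod 2) div 2 = c"
    using e1 by (simp add: add.assoc)
  ultimately show ?thesis by (simp add: m sinv_def sig_def)
qed

lemma valid_sinv: "valid (sinv m)"
proof -
  obtain a b c where m: "m = (a,b,c)" by (cases m) auto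
  have c4: "c mod 4 < 4" by simp
  have "c mod 4 div 2 < 2" using cases4[OF c4] by auto
  moreover have "2 * (c mod 2) + b mod 2 < 4"
    using mod_less_divisor[of 2 c] mod_less_divisor[of 2 b] by linarith
  ultimately show ?thesis by (simp add: m sinv_def valid_def)
qed

lemma md_sig: "valid t \<Longrightarrow> md (sig t) = degt t"
proof -
  assume "valid t"
  then obtain i j e k f where t: "t = (i,j,e,k,f)" "e < 2" "f < 4" by (cases t) (auto simp: valid_def)
  show ?thesis
    using cases4[OF t(3)] unfolding t(1) md_def sig_def degt_def dC_def by auto
qed

lemma bij_sig: "bij_betw sig (Tn n) {m. md m \<le> n}"
proof (rule bij_betw_byWitness[where f' = sinv])
  show "\<forall>a\<in>Tn n. sinv (sig a) = a" by (auto simp: Tn_def sinv_sig)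
  show "\<forall>a'\<in>{m. md m \<le> n}. sig (sinv a') = a'" by (simp add: sig_sinv)
  show "sig ` Tn n \<subseteq> {m. md m \<le> n}" by (auto simp: Tn_def md_sig)
  show "sinv ` {m. md m \<le> n} \<subseteq> Tn n"
    using md_sig[OF valid_sinv] by (auto simp: Tn_def valid_sinv sig_sinv)
qed

lemma Tn_finite: "finite (Tn n)" and Tn_card: "card (Tn n) = card (mons n)"
proof -
  show "finite (Tn n)" using bij_sig[of n] finite_md bij_betw_finite by blast
  show "card (Tn n) = card (mons n)" using bij_sig[of n] monos_card(1) bij_betw_same_card by metis
qed

lemma PP_DB: "valid t \<Longrightarrow> DB (degt t) (PP t)"
proof -
  assume "valid t"
  then obtain i j e k f where t: "t = (i,j,e,k,f)" "e < 2" "f < 4" by (cases t) (auto simp: valid_def)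
  have a: "DB (4 * i) (d4 ^ i)" using DB_power[OF DB_polys(4)] .
  have b: "DB (2 * j) (d2 ^ j)" using DB_power[OF DB_polys(3)] .
  have c: "DB k (X ^ k)" using DB_power[OF DB_XYZ(1), of k] by simp
  have e: "DB (2 * e) (eB e)" using cases2[OF t(2)] DB_polys(1) DB_one by (auto simp: eB_def)
  have f: "DB (dC f) (eC f)" using cases4[OF t(3)] DB_polys(2) DB_one DB_XYZ
    by (auto simp: eC_def dC_def)
  have "DB (4 * i + (2 * j + 2 * e) + (k + dC f)) (PP t)"
    unfolding t PP_def by (simp add: DB_mult a b c e f)
  then show ?thesis by (simp add: t degt_def add.assoc)
qed

lemma PP_span_mons: "PP ` Tn n \<subseteq> span3 (mons n)"
  by (auto simp: Tn_def intro!: DB_span DB_mono[OF PP_DB])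

lemma mons_span_PP: "mons n \<subseteq> span3 (PP ` Tn n)"
proof
  fix p assume "p \<in> mons n"
  then obtain a b c where p: "p = Poly_Mapping.single (a,b,c) 1" "a + b + c \<le> n"
    by (auto simp: mons_def md_def)
  have "p \<in> span3 (PP ` Tn (a + b + c))" using monomial_span p(1) single_monomial by simp
  moreover have "span3 (PP ` Tn (a + b + c)) \<subseteq> span3 (PP ` Tn n)"
    by (intro V.span_mono image_mono Tn_mono p(2))
  ultimately show "p \<in> span3 (PP ` Tn n)" by auto
qed

lemma finite_basis: "inj_on PP (Tn n) \<and> independent3 (PP ` Tn n)"
proof
  let ?B = "PP ` Tn n"
  have fB: "finite ?B" using Tn_finite by simp
  have c1: "card (mons n) \<le> card ?B"
    using V.independent_span_bound[OF fB monos_indep mons_span_PP] by simp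
  have c2: "card ?B \<le> card (Tn n)" using Tn_finite by (rule card_image_le)
  have cB: "card ?B = card (Tn n)" using c1 c2 Tn_card by simp
  then show "inj_on PP (Tn n)" using Tn_finite eq_card_imp_inj_on by blast
  show "independent3 ?B"
  proof
    assume "module.dependent scale3 ?B"
    then obtain a where a: "a \<in> ?B" "a \<in> span3 (?B - {a})" unfolding V.dependent_def by blast
    have "?B \<subseteq> span3 (?B - {a})" using a(2) by (auto intro: V.span_base)
    then have "span3 ?B \<subseteq> span3 (?B - {a})" by (rule span_sub_span)
    then have "mons n \<subseteq> span3 (?B - {a})" using mons_span_PP by blast
    then have "card (mons n) \<le> card (?B - {a})"
      using V.independent_span_bound[OF _ monos_indep] fB by auto
    moreover have "card (?B - {a}) < card ?B" using a(1) fB by (meson card_Diff1_less)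
    ultimately show False using cB Tn_card by simp
  qed
qed

lemma PP_fin_sub: "finite T \<Longrightarrow> T \<subseteq> {t. valid t} \<Longrightarrow> \<exists>n. T \<subseteq> Tn n"
proof (induction T rule: finite_induct)
  case empty then show ?case by simp
next
  case (insert x T)
  then obtain n where "T \<subseteq> Tn n" by auto
  then have "insert x T \<subseteq> Tn (max n (degt x))"
    using insert.prems Tn_mono[of n "max n (degt x)"] by (auto simp: Tn_def)
  then show ?case by blast
qed

lemma PP_inj: "inj_on PP {t. valid t}"
proof (rule inj_onI)
  fix s t assume "s \<in> {t. valid t}" "t \<in> {t. valid t}" "PP s = PP t"
  moreover obtain n where "{s, t} \<subseteq> Tn n" using PP_fin_sub[of "{s,t}"] \<open>s \<in> _\<close> \<open>t \<in> _\<close> by auto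
  ultimately show "s = t" using finite_basis[of n] by (auto dest: inj_onD)
qed

lemma PP_indep: "independent3 (PP ` {t. valid t})"
  unfolding indep_iff
proof (intro allI impI)
  fix T assume T: "T \<subseteq> PP ` {t. valid t} \<and> finite T \<and> T \<noteq> {}"
  then obtain U where U: "U \<subseteq> {t. valid t}" "T = PP ` U" "finite U"
    by (meson finite_subset_image)
  then obtain n where "U \<subseteq> Tn n" using PP_fin_sub by blast
  then have "T \<subseteq> PP ` Tn n" using U by auto
  then show "sum id T \<noteq> 0" using finite_basis[of n] T unfolding indep_iff by blast
qed

lemma PP_span: "span3 (PP ` {t. valid t}) = UNIV"
proof -
  have "Poly_Mapping.single m 1 \<in> span3 (PP ` {t. valid t})" for m
  proof -
    obtain a b c where m: "m = (a,b,c)" by (cases m) auto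
    have "Poly_Mapping.single m 1 \<in> span3 (PP ` Tn (a + b + c))"
      using monomial_span m single_monomial by simp
    moreover have "span3 (PP ` Tn (a + b + c)) \<subseteq> span3 (PP ` {t. valid t})"
      by (intro V.span_mono image_mono) (auto simp: Tn_def)
    ultimately show ?thesis by auto
  qed
  moreover have "p = (\<Sum>m\<in>Poly_Mapping.keys p. scale3 (Poly_Mapping.lookup p m) (Poly_Mapping.single m 1))" for p
    by (subst poly_expand) (simp add: scale3_single)
  ultimately have "p \<in> span3 (PP ` {t. valid t})" for p
    by (metis (no_types, lifting) V.span_scale V.span_sum)
  then show ?thesis by auto
qed

section \<open>From explicit bases to arbitrary independent sets\<close>

definition tprod :: "poly3 \<times> poly3 \<times> poly3 \<Rightarrow> poly3" where
  "tprod = (\<lambda>(a, b, c). a * b * c)"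

lemma span_prod2:
  assumes "a \<in> span3 S1" "b \<in> span3 S2"
  shows "a * b \<in> span3 {x * y | x y. x \<in> S1 \<and> y \<in> S2}"
  using assms(1)
proof (rule span_mult_closed[where c = b, THEN subst[OF mult.commute, of "\<lambda>u. u \<in> _"]])
  fix s assume s: "s \<in> S1"
  show "b * s \<in> span3 {x * y | x y. x \<in> S1 \<and> y \<in> S2}"
    using assms(2)
  proof (rule span_mult_closed[where c = s, THEN subst[OF mult.commute, of "\<lambda>u. u \<in> _"]])
    fix t assume "t \<in> S2"
    then show "s * t \<in> span3 {x * y | x y. x \<in> S1 \<and> y \<in> S2}" using s by (auto intro: V.span_base)
  qed
qed

lemma span_prod3:
  assumes "a \<in> span3 S1" "b \<in> span3 S2" "c \<in> span3 S3"
  shows "a * b * c \<in> span3 (tprod ` (S1 \<times> S2 \<times> S3))"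
proof -
  have "a * b * c \<in> span3 {u * z | u z. u \<in> {x * y | x y. x \<in> S1 \<and> y \<in> S2} \<and> z \<in> S3}"
    by (rule span_prod2[OF span_prod2[OF assms(1,2)] assms(3)])
  moreover have "{u * z | u z. u \<in> {x * y | x y. x \<in> S1 \<and> y \<in> S2} \<and> z \<in> S3}
      = tprod ` (S1 \<times> S2 \<times> S3)"
    by (auto simp: tprod_def image_iff) blast
  ultimately show ?thesis by simp
qed

lemma card_basis_arg:
  assumes fB: "finite B" and iE: "independent3 E" and sp: "E \<subseteq> span3 B" and c: "card B \<le> card E"
  shows "independent3 B" "card B = card E"
proof -
  have c1: "card E \<le> card B" using V.independent_span_bound[OF fB iE sp] by simp
  then show "card B = card E" using c by simp
  show "independent3 B"
  proof
    assume "module.dependent scale3 B"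
    then obtain a where a: "a \<in> B" "a \<in> span3 (B - {a})" unfolding V.dependent_def by blast
    have "B \<subseteq> span3 (B - {a})" using a(2) by (auto intro: V.span_base)
    then have "span3 B \<subseteq> span3 (B - {a})" by (rule span_sub_span)
    then have "E \<subseteq> span3 (B - {a})" using sp by blast
    then have "card E \<le> card (B - {a})"
      using V.independent_span_bound[OF _ iE] fB by auto
    moreover have "card (B - {a}) < card B" using a(1) fB by (meson card_Diff1_less)
    ultimately show False using c by simp
  qed
qed

lemma fin_span: "finite W \<Longrightarrow> W \<subseteq> span3 S \<Longrightarrow> \<exists>T. T \<subseteq> S \<and> finite T \<and> W \<subseteq> span3 T"
proof (induction W rule: finite_induct)
  case empty then show ?case by auto
next
  case (insert x W)
  then obtain T where T: "T \<subseteq> S" "finite T" "W \<subseteq> span3 T" by auto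
  have "x \<in> span3 S" using insert.prems by auto
  then obtain T' r where T': "finite T'" "T' \<subseteq> S" "x = (\<Sum>a\<in>T'. scale3 (r a) a)"
    unfolding V.span_explicit by blast
  have "x \<in> span3 (T \<union> T')" unfolding T'(3)
    by (intro V.span_sum V.span_scale V.span_base) auto
  moreover have "span3 T \<subseteq> span3 (T \<union> T')" by (rule V.span_mono) auto
  ultimately show ?case using T T' by (intro exI[of _ "T \<union> T'"]) auto
qed

lemma basis_ext:
  assumes "finite S" "independent3 S" "S \<subseteq> span3 E"
  obtains E' B where "E' \<subseteq> E" "finite E'" "S \<subseteq> B" "finite B" "independent3 B"
    "E' \<subseteq> span3 B" "card B \<le> card E'"
proof -
  obtain E' where E': "E' \<subseteq> E" "finite E'" "S \<subseteq> span3 E'" using fin_span[OF assms(1,3)] by blast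
  obtain B where B: "S \<subseteq> B" "B \<subseteq> S \<union> E'" "independent3 B" "S \<union> E' \<subseteq> span3 B"
    using V.maximal_independent_subset_extend[of S "S \<union> E'"] assms(2) by blast
  have fB: "finite B" using B(2) assms(1) E'(2) finite_subset by blast
  have "B \<subseteq> span3 E'" using B(2) E'(3) by (auto intro: V.span_base)
  then have c: "card B \<le> card E'" using V.independent_span_bound[OF E'(2) B(3)] by simp
  have s: "E' \<subseteq> span3 B" using B(4) by auto
  show ?thesis by (rule that[OF E'(1) E'(2) B(1) fB B(3) s c])
qed

lemma core:
  assumes injE: "inj_on tprod (EA \<times> EB \<times> EC)" and indE: "independent3 (tprod ` (EA \<times> EB \<times> EC))"
    and SA: "finite SA" "independent3 SA" "SA \<subseteq> span3 EA"
    and SB: "finite SB" "independent3 SB" "SB \<subseteq> span3 EB"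
    and SC: "finite SC" "independent3 SC" "SC \<subseteq> span3 EC"
  shows "inj_on tprod (SA \<times> SB \<times> SC) \<and> independent3 (tprod ` (SA \<times> SB \<times> SC))"
proof -
  obtain EA' BA where A: "EA' \<subseteq> EA" "finite EA'" "SA \<subseteq> BA" "finite BA" "independent3 BA"
    "EA' \<subseteq> span3 BA" "card BA \<le> card EA'" using basis_ext[OF SA] by blast
  obtain EB' BB where B: "EB' \<subseteq> EB" "finite EB'" "SB \<subseteq> BB" "finite BB" "independent3 BB"
    "EB' \<subseteq> span3 BB" "card BB \<le> card EB'" using basis_ext[OF SB] by blast
  obtain EC' BC where C: "EC' \<subseteq> EC" "finite EC'" "SC \<subseteq> BC" "finite BC" "independent3 BC"
    "EC' \<subseteq> span3 BC" "card BC \<le> card EC'" using basis_ext[OF SC] by blast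
  let ?P = "tprod ` (BA \<times> BB \<times> BC)"
  let ?E = "tprod ` (EA' \<times> EB' \<times> EC')"
  have sub: "EA' \<times> EB' \<times> EC' \<subseteq> EA \<times> EB \<times> EC" using A B C by auto
  have fP: "finite ?P" using A B C by simp
  have iE: "independent3 ?E" using V.independent_mono[OF indE] sub by blast
  have spE: "?E \<subseteq> span3 ?P"
  proof safe
    fix a b c assume "a \<in> EA'" "b \<in> EB'" "c \<in> EC'"
    then have "a * b * c \<in> span3 ?P" using A(6) B(6) C(6) by (intro span_prod3) auto
    then show "tprod (a, b, c) \<in> span3 ?P" by (simp add: tprod_def)
  qed
  have cE: "card ?E = card EA' * card EB' * card EC'"
    using card_image[OF inj_on_subset[OF injE sub]] by (simp add: card_cartesian_product)
  have cP: "card ?P \<le> card (BA \<times> BB \<times> BC)" using A B C by (intro card_image_le) simp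
  have cBs: "card (BA \<times> BB \<times> BC) \<le> card ?E"
    unfolding cE card_cartesian_product using A(7) B(7) C(7) by (simp add: mult_le_mono mult.assoc)
  have iP: "independent3 ?P" and ceq: "card ?P = card ?E"
    using card_basis_arg[OF fP iE spE] cP cBs by auto
  have "card ?P = card (BA \<times> BB \<times> BC)" using ceq cP cBs by simp
  then have injP: "inj_on tprod (BA \<times> BB \<times> BC)"
    using A B C eq_card_imp_inj_on[of "BA \<times> BB \<times> BC" tprod] by simp
  have sS: "SA \<times> SB \<times> SC \<subseteq> BA \<times> BB \<times> BC" using A B C by auto
  show ?thesis
    using inj_on_subset[OF injP sS] V.independent_mono[OF iP image_mono[OF sS]] by simp
qed

definition comps :: "idx \<Rightarrow> poly3 \<times> poly3 \<times> poly3" where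
  "comps t = (case t of (i,j,e,k,f) \<Rightarrow> (d4 ^ i, d2 ^ j * eB e, X ^ k * eC f))"

lemma EABC: "EA \<times> EB \<times> EC = comps ` {t. valid t}"
proof
  show "comps ` {t. valid t} \<subseteq> EA \<times> EB \<times> EC"
  proof
    fix x assume "x \<in> comps ` {t. valid t}"
    then obtain i j e k f where x: "x = comps (i,j,e,k,f)" "valid (i,j,e,k,f)" by auto
    then have "e < 2" "f < 4" by (auto simp: valid_def)
    then show "x \<in> EA \<times> EB \<times> EC"
      using cases2[of e] cases4[of f] unfolding x(1)
      by (auto simp: comps_def EA_def EB_def EC_def eB_def eC_def)
  qed
  show "EA \<times> EB \<times> EC \<subseteq> comps ` {t. valid t}"
  proof safe
    fix a b c assume abc: "a \<in> EA" "b \<in> EB" "c \<in> EC"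
    obtain i where a: "a = d4 ^ i" using abc(1) by (auto simp: EA_def)
    obtain j e where b: "b = d2 ^ j * eB e" "e < 2"
    proof -
      from abc(2) consider j where "b = d2 ^ j" | j where "b = d2 ^ j * qq" by (auto simp: EB_def)
      then show ?thesis
      proof cases
        case 1 then show ?thesis using that[of j 0] by (simp add: eB_def)
      next
        case 2 then show ?thesis using that[of j 1] by (simp add: eB_def)
      qed
    qed
    obtain k f where c: "c = X ^ k * eC f" "f < 4"
    proof -
      from abc(3) consider k where "c = X ^ k" | k where "c = X ^ k * Y" | k where "c = X ^ k * Z"
        | k where "c = X ^ k * rr" by (auto simp: EC_def)
      then show ?thesis
      proof cases
        case 1 then show ?thesis using that[of k 0] by (simp add: eC_def)
      next
        case 2 then show ?thesis using that[of k 1] by (simp add: eC_def)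
      next
        case 3 then show ?thesis using that[of k 2] by (simp add: eC_def)
      next
        case 4 then show ?thesis using that[of k 3] by (simp add: eC_def)
      qed
    qed
    have "(a, b, c) = comps (i, j, e, k, f)" by (simp add: comps_def a b c)
    moreover have "valid (i, j, e, k, f)" using b c by (simp add: valid_def)
    ultimately show "(a, b, c) \<in> comps ` {t. valid t}" by blast
  qed
qed

lemma tprod_comps: "tprod (comps t) = PP t"
  by (cases t) (simp add: tprod_def comps_def PP_def)

lemma injE: "inj_on tprod (EA \<times> EB \<times> EC)"
  unfolding EABC
proof (rule inj_on_imageI)
  show "inj_on (tprod \<circ> comps) {t. valid t}"
    using PP_inj by (simp add: comp_def tprod_comps)
qed

lemma imgE: "tprod ` (EA \<times> EB \<times> EC) = PP ` {t. valid t}"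
  unfolding EABC image_comp by (simp add: comp_def tprod_comps)

lemma indE: "independent3 (tprod ` (EA \<times> EB \<times> EC))"
  unfolding imgE by (rule PP_indep)

lemma tensor_part:
  assumes "SA \<subseteq> Amod" "SB \<subseteq> Bmod" "SC \<subseteq> Cmod"
    "independent3 SA" "independent3 SB" "independent3 SC"
  shows "inj_on tprod (SA \<times> SB \<times> SC) \<and> independent3 (tprod ` (SA \<times> SB \<times> SC))"
proof -
  have spans: "SA \<subseteq> span3 EA" "SB \<subseteq> span3 EB" "SC \<subseteq> span3 EC"
    using assms(1-3) by (simp_all add: Amod_def EA_def Bmod_eq Cmod_eq)
  have fin: "inj_on tprod (A \<times> B \<times> C) \<and> independent3 (tprod ` (A \<times> B \<times> C))"
    if "finite A" "finite B" "finite C" "A \<subseteq> SA" "B \<subseteq> SB" "C \<subseteq> SC" for A B C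
  proof (rule core[OF injE indE])
    show "independent3 A" using V.independent_mono[OF assms(4) that(4)] .
    show "independent3 B" using V.independent_mono[OF assms(5) that(5)] .
    show "independent3 C" using V.independent_mono[OF assms(6) that(6)] .
  qed (use that spans in auto)
  show ?thesis
  proof
    show "inj_on tprod (SA \<times> SB \<times> SC)"
    proof (rule inj_onI)
      fix x y assume xy: "x \<in> SA \<times> SB \<times> SC" "y \<in> SA \<times> SB \<times> SC" "tprod x = tprod y"
      obtain a b c a' b' c' where x: "x = (a,b,c)" and y: "y = (a',b',c')" by (cases x; cases y) auto
      have "inj_on tprod ({a,a'} \<times> {b,b'} \<times> {c,c'})"
        using fin[of "{a,a'}" "{b,b'}" "{c,c'}"] xy(1,2) x y by auto
      then show "x = y" using xy(3) x y by (auto dest: inj_onD)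
    qed
    show "independent3 (tprod ` (SA \<times> SB \<times> SC))"
      unfolding indep_iff
    proof (intro allI impI)
      fix T assume T: "T \<subseteq> tprod ` (SA \<times> SB \<times> SC) \<and> finite T \<and> T \<noteq> {}"
      then obtain U where U: "U \<subseteq> SA \<times> SB \<times> SC" "T = tprod ` U" "finite U"
        by (meson finite_subset_image)
      let ?A = "fst ` U" and ?B = "fst ` snd ` U" and ?C = "snd ` snd ` U"
      have "U \<subseteq> ?A \<times> ?B \<times> ?C" by force
      then have TT: "T \<subseteq> tprod ` (?A \<times> ?B \<times> ?C)" using U(2) by auto
      have "?A \<subseteq> SA" "?B \<subseteq> SB" "?C \<subseteq> SC" using U(1) by force+
      then have "independent3 (tprod ` (?A \<times> ?B \<times> ?C))"
        using fin[of ?A ?B ?C] U(3) by blast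
      then show "sum id T \<noteq> 0" using TT T unfolding indep_iff by blast
    qed
  qed
qed

lemma span_part: "span3 {a * b * c | a b c. a \<in> Amod \<and> b \<in> Bmod \<and> c \<in> Cmod} = UNIV"
proof -
  have "PP ` {t. valid t} \<subseteq> {a * b * c | a b c. a \<in> Amod \<and> b \<in> Bmod \<and> c \<in> Cmod}"
  proof
    fix p assume "p \<in> PP ` {t. valid t}"
    then obtain t where t: "valid t" "p = PP t" by auto
    then have "comps t \<in> EA \<times> EB \<times> EC" using EABC by auto
    moreover have "EA \<subseteq> Amod" "EB \<subseteq> Bmod" "EC \<subseteq> Cmod"
      by (auto simp: Amod_def EA_def Bmod_eq Cmod_eq intro: V.span_base)
    ultimately obtain a b c where "comps t = (a,b,c)" "a \<in> Amod" "b \<in> Bmod" "c \<in> Cmod"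
      by (cases "comps t") auto
    then show "p \<in> {a * b * c | a b c. a \<in> Amod \<and> b \<in> Bmod \<and> c \<in> Cmod}"
      using t tprod_comps[of t] by (auto simp: tprod_def) metis
  qed
  then have "span3 (PP ` {t. valid t}) \<subseteq> span3 {a * b * c | a b c. a \<in> Amod \<and> b \<in> Bmod \<and> c \<in> Cmod}"
    by (rule V.span_mono)
  then show ?thesis using PP_span by auto
qed

theorem proposition4p7:
  shows "kU3_submodule Amod \<and> kU3_submodule Bmod \<and> kU3_submodule Cmod
    \<and> (\<forall>g\<in>U3. \<forall>a b c. g (a * b * c) = g a * g b * g c)
    \<and> span3 {a * b * c | a b c. a \<in> Amod \<and> b \<in> Bmod \<and> c \<in> Cmod} = UNIV
    \<and> (\<forall>SA SB SC. SA \<subseteq> Amod \<and> SB \<subseteq> Bmod \<and> SC \<subseteq> Cmod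
          \<and> independent3 SA \<and> independent3 SB \<and> independent3 SC \<longrightarrow>
          inj_on (\<lambda>(a, b, c). a * b * c) (SA \<times> SB \<times> SC)
          \<and> independent3 ((\<lambda>(a, b, c). a * b * c) ` (SA \<times> SB \<times> SC)))"
proof -
  have t: "(\<lambda>(a, b, c). a * b * c) = tprod" by (simp add: tprod_def)
  have h: "\<forall>g\<in>U3. \<forall>a b c. g (a * b * c) = g a * g b * g c"
    using U3_hom by (simp add: hom3_def)
  show ?thesis
    unfolding t using submodules h span_part tensor_part by blast
qed

end
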